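(* Let $S$ be a semigroup whose loop problem (with respect to some finite semigroup choice of generators) is context-free, and let $\sigma : X^+ \to S$ be any finite semigroup choice of generators for $S$. Then the multiplication table $\{u \# v \# w^R : u, v, w \in X^+, (uv)\sigma = w\sigma\}$ of $S$ with respect to $\sigma$ and $X^+$ is a context-free language. In particular, $S$ is word hyperbolic in the sense of Duncan and Gilman.
   Context: Maps are written on the right. $X^+$, $X^*$: free semigroup and free monoid on $X$. For a monoid $M$ and surjective monoid morphism $\sigma : X^* \to M$, let $\overline{X} = \{\overline{x} : x \in X\}$ be new symbols, $\hat{X} = X \cup \overline{X}$; the loop automaton has vertex set $M$, for each $a \in M$, $x \in X$ an edge $a \to a(x\sigma)$ labelled $x$ and an edge $a(x\sigma) \to a$ labelled $\overline{x}$; the loop problem is the set of labels of paths from the identity to the identity. For a semigroup $S$ and surjective morphism $\sigma : X^+ \to S$, the loop problem of $S$ is the loop problem of $S^1$ ($S$ with a new identity adjoined even if one exists) with respect to the extension $X^* \to S^1$. Here $\#$ is a new symbol not in $X$ and $w^R$ is the reversal of $w$. A choice of representatives for $S$ is a finite semigroup choice of generators $\sigma : X^+ \to S$ with a subset $R \subseteq X^+$ such that $R\sigma = S$; it is regular if $R$ is regular; the multiplication table w.r.t. $\sigma$ and $R$ is $\{u\#v\#w^R : u,v,w \in R, (uv)\sigma = w\sigma\}$. $S$ is word hyperbolic in the sense of Duncan and Gilman if it admits a regular choice of representatives whose multiplication table is context-free. *)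

theory Defs
  imports Main
begin

text \<open>A semigroup is a type of class semigroup_mult.  The monoid S^1 is modelled by
  'a option, where None is the NEW adjoined identity (adjoined even if S has one).\<close>

fun mult1 :: "'a::semigroup_mult option \<Rightarrow> 'a option \<Rightarrow> 'a option" where
  "mult1 None b = b"
| "mult1 a None = a"
| "mult1 (Some a) (Some b) = Some (a * b)"

definition eval1 :: "('x \<Rightarrow> 'a::semigroup_mult) \<Rightarrow> 'x list \<Rightarrow> 'a option" where
  "eval1 g w = foldr (\<lambda>x acc. mult1 (Some (g x)) acc) w None"

text \<open>The semigroup morphism X^+ -> S (only meaningful on nonempty words).\<close>
definition sigma :: "('x \<Rightarrow> 'a::semigroup_mult) \<Rightarrow> 'x list \<Rightarrow> 'a" where
  "sigma g w = the (eval1 g w)"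

definition gen_choice :: "'x set \<Rightarrow> ('x \<Rightarrow> 'a::semigroup_mult) \<Rightarrow> bool" where
  "gen_choice X g \<longleftrightarrow> finite X \<and> (\<forall>s. \<exists>w \<in> lists X. w \<noteq> [] \<and> sigma g w = s)"

text \<open>Letters of hat X: Inl x is x, Inr x is overline x.  loop_path X g a w c:
  there is a path in the loop automaton of S^1 from a to c labelled w.\<close>
inductive loop_path :: "'x set \<Rightarrow> ('x \<Rightarrow> 'a::semigroup_mult) \<Rightarrow> 'a option \<Rightarrow> ('x + 'x) list \<Rightarrow> 'a option \<Rightarrow> bool"
  for X g where
  lp_nil: "loop_path X g a [] a"
| lp_fwd: "x \<in> X \<Longrightarrow> loop_path X g (mult1 a (Some (g x))) w c \<Longrightarrow> loop_path X g a (Inl x # w) c"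
| lp_bwd: "x \<in> X \<Longrightarrow> mult1 b (Some (g x)) = a \<Longrightarrow> loop_path X g b w c \<Longrightarrow> loop_path X g a (Inr x # w) c"

definition loop_problem :: "'x set \<Rightarrow> ('x \<Rightarrow> 'a::semigroup_mult) \<Rightarrow> ('x + 'x) list set" where
  "loop_problem X g = {w. loop_path X g None w None}"

text \<open>Context-free grammars with nonterminals in nat (any finite grammar can be so encoded);
  a production is (A, rhs) with rhs a list of nonterminals (Inl) and terminals (Inr).\<close>
inductive derives :: "(nat \<times> (nat + 't) list) set \<Rightarrow> (nat + 't) list \<Rightarrow> 't list \<Rightarrow> bool"
  for P where
  der_nil: "derives P [] []"
| der_term: "derives P \<alpha> w \<Longrightarrow> derives P (Inr t # \<alpha>) (t # w)"
| der_nt: "(B, \<beta>) \<in> P \<Longrightarrow> derives P \<beta> u \<Longrightarrow> derives P \<alpha> w \<Longrightarrow> derives P (Inl B # \<alpha>) (u @ w)"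

definition cfg_lang :: "(nat \<times> (nat + 't) list) set \<Rightarrow> nat \<Rightarrow> 't list set" where
  "cfg_lang P S = {w. derives P [Inl S] w}"

definition context_free :: "'t list set \<Rightarrow> bool" where
  "context_free L \<longleftrightarrow> (\<exists>P S. finite P \<and> L = cfg_lang P S)"

fun nfa_reach :: "(nat \<Rightarrow> 't \<Rightarrow> nat set) \<Rightarrow> nat \<Rightarrow> 't list \<Rightarrow> nat set" where
  "nfa_reach \<delta> q [] = {q}"
| "nfa_reach \<delta> q (t # w) = (\<Union>q' \<in> \<delta> q t. nfa_reach \<delta> q' w)"

definition regular :: "'t list set \<Rightarrow> bool" where
  "regular L \<longleftrightarrow> (\<exists>Q q0 F \<delta>. finite Q \<and> q0 \<in> Q \<and> F \<subseteq> Q \<and> (\<forall>q t. \<delta> q t \<subseteq> Q) \<and>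
      L = {w. nfa_reach \<delta> q0 w \<inter> F \<noteq> {}})"

text \<open>Terminal None is the separator #, Some x is the letter x.\<close>
definition mult_table :: "('x \<Rightarrow> 'a::semigroup_mult) \<Rightarrow> 'x list set \<Rightarrow> 'x option list set" where
  "mult_table g R = {map Some u @ [None] @ map Some v @ [None] @ map Some (rev w) | u v w.
      u \<in> R \<and> v \<in> R \<and> w \<in> R \<and> sigma g (u @ v) = sigma g w}"

definition plus_words :: "'x set \<Rightarrow> 'x list set" where
  "plus_words X = {w \<in> lists X. w \<noteq> []}"

text \<open>Regular choice of representatives with context-free multiplication table.
  Generating alphabets are taken inside nat (every finite alphabet can be encoded).\<close>
definition word_hyperbolic_DG :: "'a::semigroup_mult itself \<Rightarrow> bool" where
  "word_hyperbolic_DG _ \<longleftrightarrow> (\<exists>(X::nat set) (g::nat \<Rightarrow> 'a) R.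
      gen_choice X g \<and> R \<subseteq> plus_words X \<and> (\<forall>s. \<exists>w \<in> R. sigma g w = s) \<and>
      regular R \<and> context_free (mult_table g R))"

end

theory Submission
  imports Defs "HOL-Library.Nat_Bijection"
begin

lemma der_append:
  "derives P \<alpha> w1 \<Longrightarrow> derives P \<beta> w2 \<Longrightarrow> derives P (\<alpha> @ \<beta>) (w1 @ w2)"
proof (induction rule: derives.induct)
  case der_nil then show ?case by simp
next
  case (der_term \<alpha> w t) then show ?case by (simp add: derives.der_term)
next
  case (der_nt B \<beta>' u \<alpha> w)
  then have "derives P (Inl B # (\<alpha> @ \<beta>)) (u @ (w @ w2))" by (intro derives.der_nt)
  then show ?case by simp
qed

lemma der_map_Inr: "derives P (map Inr out) out"
  by (induction out) (auto intro: derives.intros)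

lemma der_map_Inr_inv: "derives P (map Inr out) u \<Longrightarrow> u = out"
proof (induction out arbitrary: u)
  case Nil then show ?case by (auto elim: derives.cases)
next
  case (Cons a out)
  from Cons.prems show ?case
    by (cases rule: derives.cases) (auto simp: Cons.IH)
qed

lemma der_nil_inv: "derives P [] w \<Longrightarrow> w = []"
  by (erule derives.cases) auto

lemma der_single_inv:
  assumes "derives P [Inl B] u" shows "\<exists>\<beta>. (B, \<beta>) \<in> P \<and> derives P \<beta> u"
  using assms
proof (cases rule: derives.cases)
  case (der_nt \<beta> u' w)
  then show ?thesis using der_nil_inv[of P w] by auto
qed

section \<open>Transducers\<close>

inductive run :: "('q \<times> 't \<times> 'ou list \<times> 'q) set \<Rightarrow> 'q \<Rightarrow> 't list \<Rightarrow> 'q \<Rightarrow> 'ou list \<Rightarrow> bool"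
  for D where
  run_nil: "run D p [] p []"
| run_step: "(p, a, out, r) \<in> D \<Longrightarrow> run D r w q ou \<Longrightarrow> run D p (a # w) q (out @ ou)"

lemma run_append:
  "run D p w1 r ou1 \<Longrightarrow> run D r w2 q ou2 \<Longrightarrow> run D p (w1 @ w2) q (ou1 @ ou2)"
proof (induction rule: run.induct)
  case (run_nil p) then show ?case by simp
next
  case (run_step p a out r w q' ou)
  then have "run D p (a # (w @ w2)) q (out @ (ou @ ou2))" by (intro run.run_step)
  then show ?case by simp
qed

lemma run_split:
  "run D p (w1 @ w2) q ou \<Longrightarrow> \<exists>r ou1 ou2. run D p w1 r ou1 \<and> run D r w2 q ou2 \<and> ou = ou1 @ ou2"
proof (induction w1 arbitrary: p ou)
  case Nil
  have "run D p [] p []" by (rule run.run_nil)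
  with Nil show ?case by fastforce
next
  case (Cons a w1)
  from Cons.prems obtain out r ou' where 1: "(p, a, out, r) \<in> D" and 2: "run D r (w1 @ w2) q ou'" and 3: "ou = out @ ou'"
    by (cases rule: run.cases) auto
  from Cons.IH[OF 2] obtain r' o1 o2 where "run D r w1 r' o1" "run D r' w2 q o2" "ou' = o1 @ o2"
    by blast
  moreover from 1 this(1) have "run D p (a # w1) r' (out @ o1)" by (rule run.run_step)
  ultimately show ?case using 3 by fastforce
qed

lemma run_Q:
  assumes "D \<subseteq> Q \<times> UNIV \<times> UNIV \<times> Q"
  shows "run D p w q ou \<Longrightarrow> p \<in> Q \<Longrightarrow> q \<in> Q"
  by (induction rule: run.induct) (use assms in auto)

inductive tseq for D :: "('q \<times> 't \<times> 'ou list \<times> 'q) set" and Q :: "'q set"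
  and nc :: "'q \<Rightarrow> nat \<Rightarrow> 'q \<Rightarrow> nat" and tc :: "'q \<times> 't \<times> 'ou list \<times> 'q \<Rightarrow> nat" where
  ts_nil: "tseq D Q nc tc p [] p []"
| ts_nt: "p \<in> Q \<Longrightarrow> r \<in> Q \<Longrightarrow> tseq D Q nc tc r \<alpha> q \<gamma> \<Longrightarrow>
     tseq D Q nc tc p (Inl B # \<alpha>) q (Inl (nc p B r) # \<gamma>)"
| ts_t: "(p, y, out, r) \<in> D \<Longrightarrow> tseq D Q nc tc r \<alpha> q \<gamma> \<Longrightarrow>
     tseq D Q nc tc p (Inr y # \<alpha>) q (Inl (tc (p, y, out, r)) # \<gamma>)"

lemma tseq_finite:
  assumes "finite Q" "finite D"
  shows "finite {(r, \<gamma>). tseq D Q nc tc p \<beta> r \<gamma>}"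
proof (induction \<beta> arbitrary: p)
  case Nil
  have "{(r, \<gamma>). tseq D Q nc tc p [] r \<gamma>} \<subseteq> {(p, [])}"
  proof (rule subsetI)
    fix z assume "z \<in> {(r, \<gamma>). tseq D Q nc tc p [] r \<gamma>}"
    then obtain r \<gamma> where z: "z = (r, \<gamma>)" "tseq D Q nc tc p [] r \<gamma>" by auto
    from z(2) have "r = p \<and> \<gamma> = []" by (cases rule: tseq.cases) auto
    then show "z \<in> {(p, [])}" using z by simp
  qed
  then show ?case by (rule finite_subset) simp
next
  case (Cons X \<beta>)
  show ?case
  proof (cases X)
    case (Inl B)
    have "{(r, \<gamma>). tseq D Q nc tc p (X # \<beta>) r \<gamma>} \<subseteq>
      (\<Union>r'\<in>Q. (\<lambda>(q, \<gamma>). (q, Inl (nc p B r') # \<gamma>)) ` {(r, \<gamma>). tseq D Q nc tc r' \<beta> r \<gamma>})"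
    proof (rule subsetI)
      fix z assume "z \<in> {(r, \<gamma>). tseq D Q nc tc p (X # \<beta>) r \<gamma>}"
      then obtain r \<gamma> where z: "z = (r, \<gamma>)" "tseq D Q nc tc p (Inl B # \<beta>) r \<gamma>" using Inl by auto
      from z(2) obtain r' \<gamma>' where "r' \<in> Q" "tseq D Q nc tc r' \<beta> r \<gamma>'" "\<gamma> = Inl (nc p B r') # \<gamma>'"
        by (cases rule: tseq.cases) auto
      then show "z \<in> (\<Union>r'\<in>Q. (\<lambda>(q, \<gamma>). (q, Inl (nc p B r') # \<gamma>)) ` {(r, \<gamma>). tseq D Q nc tc r' \<beta> r \<gamma>})"
        using z(1) by force
    qed
    then show ?thesis by (rule finite_subset) (use assms Cons.IH in simp)
  next
    case (Inr y)
    have "{(r, \<gamma>). tseq D Q nc tc p (X # \<beta>) r \<gamma>} \<subseteq>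
      (\<Union>d\<in>D. (\<lambda>(q, \<gamma>). (q, Inl (tc d) # \<gamma>)) ` {(r, \<gamma>). tseq D Q nc tc (snd (snd (snd d))) \<beta> r \<gamma>})"
    proof (rule subsetI)
      fix z assume "z \<in> {(r, \<gamma>). tseq D Q nc tc p (X # \<beta>) r \<gamma>}"
      then obtain r \<gamma> where z: "z = (r, \<gamma>)" "tseq D Q nc tc p (Inr y # \<beta>) r \<gamma>" using Inr by auto
      from z(2) obtain out r' \<gamma>' where "(p, y, out, r') \<in> D" "tseq D Q nc tc r' \<beta> r \<gamma>'"
         "\<gamma> = Inl (tc (p, y, out, r')) # \<gamma>'"
        by (cases rule: tseq.cases) auto
      then show "z \<in> (\<Union>d\<in>D. (\<lambda>(q, \<gamma>). (q, Inl (tc d) # \<gamma>)) ` {(r, \<gamma>). tseq D Q nc tc (snd (snd (snd d))) \<beta> r \<gamma>})"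
        using z(1) by force
    qed
    then show ?thesis by (rule finite_subset) (use assms Cons.IH in simp)
  qed
qed

lemma transducer_cf:
  fixes D :: "('q \<times> 't \<times> 'o list \<times> 'q) set"
  assumes fQ: "finite Q" and fD: "finite D" and DQ: "D \<subseteq> Q \<times> UNIV \<times> UNIV \<times> Q"
    and q0: "q0 \<in> Q" and FQ: "F \<subseteq> Q" and cf: "context_free L"
  shows "context_free {ou. \<exists>w\<in>L. \<exists>f\<in>F. run D q0 w f ou}"
proof -
  from cf obtain P S where fP: "finite P" and L: "L = cfg_lang P S"
    unfolding context_free_def by blast
  obtain qc :: "'q \<Rightarrow> nat" where qc: "inj_on qc Q"
    using finite_imp_inj_to_nat_seg[OF fQ] by blast
  obtain dc :: "'q \<times> 't \<times> 'o list \<times> 'q \<Rightarrow> nat" where dc: "inj_on dc D"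
    using finite_imp_inj_to_nat_seg[OF fD] by blast
  define nc where "nc p B r = 3 * prod_encode (qc p, prod_encode (B, qc r)) + 1" for p B r
  define tc where "tc d = 3 * dc d + 2" for d
  define P' where "P' = (\<lambda>f. (0::nat, [Inl (nc q0 S f)])) ` F
     \<union> (\<Union>B\<beta>\<in>P. \<Union>p\<in>Q. (\<lambda>(r, \<gamma>). (nc p (fst B\<beta>) r, \<gamma>)) ` {(r, \<gamma>). tseq D Q nc tc p (snd B\<beta>) r \<gamma> \<and> r \<in> Q})
     \<union> (\<lambda>d. (tc d, map Inr (fst (snd (snd d))))) ` D"
  have nc_inj: "p = p' \<and> B = B' \<and> r = r'"
    if "nc p B r = nc p' B' r'" "p \<in> Q" "p' \<in> Q" "r \<in> Q" "r' \<in> Q" for p B r p' B' r'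
    using that qc unfolding nc_def by (auto dest: inj_onD)
  have tc_inj: "d = d'" if "tc d = tc d'" "d \<in> D" "d' \<in> D" for d d'
    using that dc unfolding tc_def by (auto dest: inj_onD)
  have nc_tc: "nc p B r \<noteq> tc d" for p B r d
  proof -
    have "3 * a + 1 \<noteq> 3 * b + (2::nat)" for a b by presburger
    then show ?thesis unfolding nc_def tc_def by blast
  qed
  have nc0: "nc p B r \<noteq> 0" for p B r unfolding nc_def by simp
  have tc0: "tc d \<noteq> 0" for d unfolding tc_def by simp
  have fin: "finite P'"
  proof -
    have "finite {(r, \<gamma>). tseq D Q nc tc p \<beta> r \<gamma> \<and> r \<in> Q}" for p \<beta>
      by (rule finite_subset[OF _ tseq_finite[OF fQ fD, of nc tc p \<beta>]]) auto
    then show ?thesis unfolding P'_def using fP fQ fD FQ finite_subset[OF FQ fQ] by auto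
  qed
  have P'_nt: "(nc p B r, \<gamma>) \<in> P'" if "(B, \<beta>) \<in> P" "p \<in> Q" "r \<in> Q" "tseq D Q nc tc p \<beta> r \<gamma>"
    for p B r \<beta> \<gamma>
  proof -
    have "(nc p B r, \<gamma>) \<in> (\<lambda>(r, \<gamma>). (nc p (fst (B, \<beta>)) r, \<gamma>)) ` {(r, \<gamma>). tseq D Q nc tc p (snd (B, \<beta>)) r \<gamma> \<and> r \<in> Q}"
      using that by force
    then show ?thesis unfolding P'_def using that by blast
  qed
  have P'_t: "(tc (p, y, out, r), map Inr out) \<in> P'" if "(p, y, out, r) \<in> D" for p y out r
    unfolding P'_def using that by force
  have P'_start: "(0, [Inl (nc q0 S f)]) \<in> P'" if "f \<in> F" for f
    unfolding P'_def using that by blast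
  have P'_inv: "(C, \<delta>) \<in> P' \<Longrightarrow> (C = 0 \<and> (\<exists>f\<in>F. \<delta> = [Inl (nc q0 S f)])) \<or>
      (\<exists>p B r \<beta>. C = nc p B r \<and> (B, \<beta>) \<in> P \<and> p \<in> Q \<and> r \<in> Q \<and> tseq D Q nc tc p \<beta> r \<delta>) \<or>
      (\<exists>d\<in>D. C = tc d \<and> \<delta> = map Inr (fst (snd (snd d))))" for C \<delta>
    unfolding P'_def by force
  have fwd: "\<exists>\<gamma>. tseq D Q nc tc p \<alpha> q \<gamma> \<and> derives P' \<gamma> ou"
    if "derives P \<alpha> w" "p \<in> Q" "run D p w q ou" for \<alpha> w p q ou
    using that
  proof (induction arbitrary: p q ou rule: derives.induct)
    case der_nil
    from der_nil.prems(2) have "q = p \<and> ou = []" by (cases rule: run.cases) auto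
    then show ?case using tseq.ts_nil derives.der_nil by fastforce
  next
    case (der_term \<alpha> w t)
    from der_term.prems(2) obtain out r ou' where tr: "(p, t, out, r) \<in> D" and rr: "run D r w q ou'"
      and ou: "ou = out @ ou'"
      by (cases rule: run.cases) auto
    have rQ: "r \<in> Q" using tr DQ by auto
    from der_term.IH[OF rQ rr] obtain \<gamma> where g: "tseq D Q nc tc r \<alpha> q \<gamma>" "derives P' \<gamma> ou'" by blast
    have "tseq D Q nc tc p (Inr t # \<alpha>) q (Inl (tc (p, t, out, r)) # \<gamma>)"
      by (rule tseq.ts_t[OF tr g(1)])
    moreover have "derives P' (Inl (tc (p, t, out, r)) # \<gamma>) (out @ ou')"
      by (rule derives.der_nt[OF P'_t[OF tr] der_map_Inr g(2)])
    ultimately show ?case using ou by blast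
  next
    case (der_nt B \<beta> u \<alpha> w)
    from run_split[OF der_nt.prems(2)] obtain r o1 o2 where
      r1: "run D p u r o1" and r2: "run D r w q o2" and ou: "ou = o1 @ o2" by blast
    have rQ: "r \<in> Q" using run_Q[OF DQ r1 der_nt.prems(1)] .
    from der_nt.IH(1)[OF der_nt.prems(1) r1] obtain \<gamma>1 where
      g1: "tseq D Q nc tc p \<beta> r \<gamma>1" "derives P' \<gamma>1 o1" by blast
    from der_nt.IH(2)[OF rQ r2] obtain \<gamma>2 where
      g2: "tseq D Q nc tc r \<alpha> q \<gamma>2" "derives P' \<gamma>2 o2" by blast
    have "tseq D Q nc tc p (Inl B # \<alpha>) q (Inl (nc p B r) # \<gamma>2)"
      by (rule tseq.ts_nt[OF der_nt.prems(1) rQ g2(1)])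
    moreover have "derives P' (Inl (nc p B r) # \<gamma>2) (o1 @ o2)"
      by (rule derives.der_nt[OF P'_nt[OF der_nt.hyps(1) der_nt.prems(1) rQ g1(1)] g1(2) g2(2)])
    ultimately show ?case using ou by blast
  qed
  have bwd: "\<exists>w. derives P \<alpha> w \<and> run D p w q ou"
    if "derives P' \<gamma> ou" "tseq D Q nc tc p \<alpha> q \<gamma>" "p \<in> Q" for \<gamma> ou p \<alpha> q
    using that
  proof (induction arbitrary: p \<alpha> q rule: derives.induct)
    case der_nil
    from der_nil.prems(1) have "\<alpha> = [] \<and> q = p" by (cases rule: tseq.cases) auto
    then show ?case using derives.der_nil run.run_nil by fastforce
  next
    case (der_term \<gamma> ou t)
    from der_term.prems(1) show ?case by (cases rule: tseq.cases)
  next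
    case (der_nt C \<delta> u \<gamma> ou)
    from der_nt.prems(1) show ?case
    proof (cases rule: tseq.cases)
      case (ts_nt r \<alpha>' B)
      have "C \<noteq> 0" using ts_nt(2) nc0 by simp
      have "\<forall>d. C \<noteq> tc d" using ts_nt(2) nc_tc by simp
      note this \<open>C \<noteq> 0\<close>
      with P'_inv[OF der_nt.hyps(1)] obtain p' B' r' \<beta> where
        hh: "C = nc p' B' r'" "(B', \<beta>) \<in> P" "p' \<in> Q" "r' \<in> Q" "tseq D Q nc tc p' \<beta> r' \<delta>"
        by blast
      have "nc p B r = nc p' B' r'" using hh(1) ts_nt(2) by simp
      from nc_inj[OF this ts_nt(3) hh(3) ts_nt(4) hh(4)] have eq: "p' = p" "B' = B" "r' = r" by simp_all
      from der_nt.IH(1)[OF hh(5)[unfolded eq] der_nt.prems(2)] obtain w1 where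
        w1: "derives P \<beta> w1" "run D p w1 r u" using eq hh by auto
      from der_nt.IH(2)[OF ts_nt(5) ts_nt(4)] obtain w2 where
        w2: "derives P \<alpha>' w2" "run D r w2 q ou" by blast
      have "derives P (Inl B # \<alpha>') (w1 @ w2)"
        using derives.der_nt[OF _ w1(1) w2(1)] hh(2) eq by simp
      moreover have "run D p (w1 @ w2) q (u @ ou)" by (rule run_append[OF w1(2) w2(2)])
      ultimately show ?thesis using ts_nt by blast
    next
      case (ts_t y out r \<alpha>')
      have "C \<noteq> 0" using ts_t(2) tc0 by simp
      have "\<forall>p B r. C \<noteq> nc p B r" using ts_t(2) nc_tc by metis
      note this \<open>C \<noteq> 0\<close>
      with P'_inv[OF der_nt.hyps(1)] obtain d where
        hh: "d \<in> D" "C = tc d" "\<delta> = map Inr (fst (snd (snd d)))"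
        by blast
      have "tc d = tc (p, y, out, r)" using hh(2) ts_t(2) by simp
      from tc_inj[OF this hh(1) ts_t(3)] have eq: "d = (p, y, out, r)" .
      with hh der_map_Inr_inv[of P' out u] der_nt.hyps(2) have u: "u = out" by simp
      have rQ: "r \<in> Q" using ts_t(3) DQ by auto
      from der_nt.IH(2)[OF ts_t(4) rQ] obtain w2 where
        w2: "derives P \<alpha>' w2" "run D r w2 q ou" by blast
      have "derives P (Inr y # \<alpha>') (y # w2)" by (rule derives.der_term[OF w2(1)])
      moreover have "run D p (y # w2) q (out @ ou)" by (rule run.run_step[OF ts_t(3) w2(2)])
      ultimately show ?thesis using ts_t u by blast
    qed
  qed
  have "cfg_lang P' 0 = {ou. \<exists>w\<in>L. \<exists>f\<in>F. run D q0 w f ou}"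
  proof (intro equalityI subsetI)
    fix ou assume "ou \<in> cfg_lang P' 0"
    then have "derives P' [Inl 0] ou" unfolding cfg_lang_def by simp
    from der_single_inv[OF this] obtain \<delta> where d: "(0, \<delta>) \<in> P'" "derives P' \<delta> ou" by blast
    from P'_inv[OF d(1)] obtain f where f: "f \<in> F" "\<delta> = [Inl (nc q0 S f)]"
      using nc0 tc0 by metis
    have fQ': "f \<in> Q" using f FQ by auto
    have "tseq D Q nc tc q0 [Inl S] f \<delta>"
      unfolding f(2) by (rule tseq.ts_nt[OF q0 fQ' tseq.ts_nil])
    from bwd[OF d(2) this q0] obtain w where "derives P [Inl S] w" "run D q0 w f ou" by blast
    then show "ou \<in> {ou. \<exists>w\<in>L. \<exists>f\<in>F. run D q0 w f ou}"
      using f(1) unfolding L cfg_lang_def by blast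
  next
    fix ou assume "ou \<in> {ou. \<exists>w\<in>L. \<exists>f\<in>F. run D q0 w f ou}"
    then obtain w f where w: "derives P [Inl S] w" "f \<in> F" "run D q0 w f ou"
      unfolding L cfg_lang_def by blast
    from fwd[OF w(1) q0 w(3)] obtain \<gamma> where g: "tseq D Q nc tc q0 [Inl S] f \<gamma>" "derives P' \<gamma> ou"
      by blast
    from g(1) obtain r \<gamma>' where "\<gamma> = Inl (nc q0 S r) # \<gamma>'" "tseq D Q nc tc r [] f \<gamma>'"
      by (cases rule: tseq.cases) auto
    moreover from this(2) have "r = f \<and> \<gamma>' = []" by (cases rule: tseq.cases) auto
    ultimately have "\<gamma> = [Inl (nc q0 S f)]" by simp
    with g(2) have "derives P' [Inl 0] (ou @ [])"
      using derives.der_nt[OF P'_start[OF w(2)] _ derives.der_nil] by simp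
    then show "ou \<in> cfg_lang P' 0" unfolding cfg_lang_def by simp
  qed
  then show ?thesis unfolding context_free_def using fin by blast
qed

lemma mult1_None_right [simp]: "mult1 a None = a"
  by (cases a) auto

lemma mult1_Some_Some [simp]: "mult1 (Some a) (Some b) = Some (a * b)" by simp

lemma mult1_assoc: "mult1 (mult1 a b) c = mult1 a (mult1 b c)"
  by (cases a; cases b; cases c) (auto simp: mult.assoc)

lemma eval1_Nil [simp]: "eval1 g [] = None" by (simp add: eval1_def)

lemma eval1_Cons [simp]: "eval1 g (x # w) = mult1 (Some (g x)) (eval1 g w)"
  by (simp add: eval1_def)

lemma eval1_append: "eval1 g (u @ v) = mult1 (eval1 g u) (eval1 g v)"
  by (induction u) (auto simp: mult1_assoc)

lemma mult1_Some_left_ne: "mult1 (Some a) b \<noteq> None"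
  by (cases b) auto

lemma eval1_nonempty: "w \<noteq> [] \<Longrightarrow> eval1 g w = Some (sigma g w)"
proof (cases w)
  case (Cons x w')
  then obtain s where "eval1 g w = Some s" using mult1_Some_left_ne[of "g x" "eval1 g w'"] by auto
  then show ?thesis unfolding sigma_def by simp
qed simp

lemma eval1_map: "eval1 g (map f w) = eval1 (g \<circ> f) w"
  by (induction w) auto

lemma eval1_cong: "(\<And>x. x \<in> set w \<Longrightarrow> g x = g' x) \<Longrightarrow> eval1 g w = eval1 g' w"
  by (induction w) auto

section \<open>Loop paths\<close>

lemma lp_Inl_iff:
  "loop_path Y h a (Inl y # w) c \<longleftrightarrow> y \<in> Y \<and> loop_path Y h (mult1 a (Some (h y))) w c"
proof
  assume "loop_path Y h a (Inl y # w) c"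
  then show "y \<in> Y \<and> loop_path Y h (mult1 a (Some (h y))) w c"
    by (cases rule: loop_path.cases) auto
next
  assume "y \<in> Y \<and> loop_path Y h (mult1 a (Some (h y))) w c"
  then show "loop_path Y h a (Inl y # w) c" by (auto intro: loop_path.lp_fwd)
qed

lemma lp_Inr_iff:
  "loop_path Y h a (Inr y # w) c \<longleftrightarrow> y \<in> Y \<and> (\<exists>b. mult1 b (Some (h y)) = a \<and> loop_path Y h b w c)"
proof
  assume "loop_path Y h a (Inr y # w) c"
  then show "y \<in> Y \<and> (\<exists>b. mult1 b (Some (h y)) = a \<and> loop_path Y h b w c)"
    by (cases rule: loop_path.cases) auto
next
  assume "y \<in> Y \<and> (\<exists>b. mult1 b (Some (h y)) = a \<and> loop_path Y h b w c)"
  then show "loop_path Y h a (Inr y # w) c" by (auto intro: loop_path.lp_bwd)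
qed

lemma lp_Nil_iff: "loop_path Y h a [] c \<longleftrightarrow> a = c"
proof
  assume "loop_path Y h a [] c" then show "a = c" by (cases rule: loop_path.cases) auto
qed (auto intro: loop_path.lp_nil)

lemma lp_fwd_word:
  "set ys \<subseteq> Y \<Longrightarrow> loop_path Y h a (map Inl ys @ rest) c \<longleftrightarrow> loop_path Y h (mult1 a (eval1 h ys)) rest c"
proof (induction ys arbitrary: a)
  case Nil then show ?case by simp
next
  case (Cons y ys)
  have "loop_path Y h a (map Inl (y # ys) @ rest) c \<longleftrightarrow> loop_path Y h (mult1 a (Some (h y))) (map Inl ys @ rest) c"
    using Cons.prems by (simp add: lp_Inl_iff)
  also have "\<dots> \<longleftrightarrow> loop_path Y h (mult1 (mult1 a (Some (h y))) (eval1 h ys)) rest c"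
    using Cons by simp
  finally show ?case by (simp add: mult1_assoc)
qed

lemma lp_bwd_word:
  "set ys \<subseteq> Y \<Longrightarrow> loop_path Y h a (map Inr (rev ys)) c \<longleftrightarrow> a = mult1 c (eval1 h ys)"
proof (induction ys arbitrary: a rule: rev_induct)
  case Nil then show ?case by (simp add: lp_Nil_iff)
next
  case (snoc y ys)
  have "loop_path Y h a (map Inr (rev (ys @ [y]))) c \<longleftrightarrow>
     (\<exists>b. mult1 b (Some (h y)) = a \<and> loop_path Y h b (map Inr (rev ys)) c)"
    using snoc.prems by (simp add: lp_Inr_iff)
  also have "\<dots> \<longleftrightarrow> a = mult1 (mult1 c (eval1 h ys)) (Some (h y))"
    using snoc by auto
  also have "\<dots> \<longleftrightarrow> a = mult1 c (eval1 h (ys @ [y]))"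
    by (simp add: eval1_append mult1_assoc)
  finally show ?case .
qed

lemma eval1_concat:
  assumes "\<And>x. x \<in> set u \<Longrightarrow> eval1 h (\<phi> x) = Some (g x)"
  shows "eval1 h (concat (map \<phi> u)) = eval1 g u"
  using assms by (induction u) (auto simp: eval1_append)

lemma loop_word_iff:
  assumes phi: "\<And>x. x \<in> X \<Longrightarrow> set (\<phi> x) \<subseteq> Y \<and> \<phi> x \<noteq> [] \<and> sigma h (\<phi> x) = g x"
    and uvw: "set u \<subseteq> X" "set v \<subseteq> X" "set w \<subseteq> X" "u \<noteq> []" "w \<noteq> []"
  shows "map Inl (concat (map \<phi> u)) @ map Inl (concat (map \<phi> v)) @ map Inr (rev (concat (map \<phi> w)))
      \<in> loop_problem Y h \<longleftrightarrow> sigma g (u @ v) = sigma g w"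
proof -
  have ev: "eval1 h (\<phi> x) = Some (g x)" if "x \<in> X" for x
    using phi[OF that] eval1_nonempty[of "\<phi> x" h] by auto
  have setY: "set (concat (map \<phi> z)) \<subseteq> Y" if "set z \<subseteq> X" for z
    using that phi by auto
  have suv: "set (u @ v) \<subseteq> X" using uvw by simp
  have A: "map Inl (concat (map \<phi> u)) @ map Inl (concat (map \<phi> v)) @ map Inr (rev (concat (map \<phi> w)))
      = map Inl (concat (map \<phi> (u @ v))) @ map Inr (rev (concat (map \<phi> w)))" by simp
  have "map Inl (concat (map \<phi> u)) @ map Inl (concat (map \<phi> v)) @ map Inr (rev (concat (map \<phi> w)))
      \<in> loop_problem Y h \<longleftrightarrow> loop_path Y h (mult1 None (eval1 h (concat (map \<phi> (u @ v)))))
         (map Inr (rev (concat (map \<phi> w)))) None"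
    unfolding loop_problem_def mem_Collect_eq A by (rule lp_fwd_word[OF setY[OF suv]])
  also have "\<dots> \<longleftrightarrow> eval1 h (concat (map \<phi> (u @ v))) = eval1 h (concat (map \<phi> w))"
    by (subst lp_bwd_word[OF setY[OF uvw(3)]]) simp
  also have "\<dots> \<longleftrightarrow> eval1 g (u @ v) = eval1 g w"
  proof -
    have "eval1 h (concat (map \<phi> (u @ v))) = eval1 g (u @ v)"
      by (rule eval1_concat) (use ev suv in auto)
    moreover have "eval1 h (concat (map \<phi> w)) = eval1 g w"
      by (rule eval1_concat) (use ev uvw(3) in auto)
    ultimately show ?thesis by simp
  qed
  also have "\<dots> \<longleftrightarrow> sigma g (u @ v) = sigma g w"
    using eval1_nonempty[of "u @ v" g] eval1_nonempty[of w g] uvw by simp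
  finally show ?thesis .
qed

definition SS :: "'x set \<Rightarrow> ('x \<Rightarrow> 'y list) \<Rightarrow> ('y + 'y) list set" where
  "SS X \<phi> = (\<Union>x\<in>X. (\<lambda>n. drop n (map Inl (\<phi> x))) ` {..length (\<phi> x)}
                  \<union> (\<lambda>n. drop n (map Inr (rev (\<phi> x)))) ` {..length (\<phi> x)})"

definition QQ :: "'x set \<Rightarrow> ('x \<Rightarrow> 'y list) \<Rightarrow> (nat \<times> ('y + 'y) list) set" where
  "QQ X \<phi> = {0, 1, 3, 5} \<times> SS X \<phi>"

definition DD :: "'x set \<Rightarrow> ('x \<Rightarrow> 'y list) \<Rightarrow>
   ((nat \<times> ('y + 'y) list) \<times> ('y + 'y) \<times> 'x option list \<times> (nat \<times> ('y + 'y) list)) set" where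
  "DD X \<phi> =
     (\<lambda>x. ((0, []), Inl (hd (\<phi> x)), [Some x], (1, map Inl (tl (\<phi> x))))) ` X
   \<union> (\<lambda>x. ((1, []), Inl (hd (\<phi> x)), [Some x], (1, map Inl (tl (\<phi> x))))) ` X
   \<union> (\<lambda>x. ((1, []), Inl (hd (\<phi> x)), [None, Some x], (3, map Inl (tl (\<phi> x))))) ` X
   \<union> (\<lambda>x. ((3, []), Inl (hd (\<phi> x)), [Some x], (3, map Inl (tl (\<phi> x))))) ` X
   \<union> (\<lambda>x. ((3, []), Inr (hd (rev (\<phi> x))), [None, Some x], (5, map Inr (tl (rev (\<phi> x)))))) ` X
   \<union> (\<lambda>x. ((5, []), Inr (hd (rev (\<phi> x))), [Some x], (5, map Inr (tl (rev (\<phi> x)))))) ` X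
   \<union> (\<lambda>(k, l). ((k, l), hd l, [], (k, tl l))) ` ({1, 3, 5} \<times> (SS X \<phi> - {[]}))"

lemma drop_min: "drop n xs = drop (min n (length xs)) xs"
  by (cases "n \<le> length xs") (auto simp: min_def)

lemma SS_dropl: "x \<in> X \<Longrightarrow> drop n (map Inl (\<phi> x)) \<in> SS X \<phi>"
  unfolding SS_def by (subst drop_min) force

lemma SS_dropr: "x \<in> X \<Longrightarrow> drop n (map Inr (rev (\<phi> x))) \<in> SS X \<phi>"
  unfolding SS_def by (subst drop_min) force

lemma SS_tl: "l \<in> SS X \<phi> \<Longrightarrow> tl l \<in> SS X \<phi>"
proof -
  assume "l \<in> SS X \<phi>"
  then obtain x n where "x \<in> X" "l = drop n (map Inl (\<phi> x)) \<or> l = drop n (map Inr (rev (\<phi> x)))"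
    unfolding SS_def by blast
  then show ?thesis
    using SS_dropl[of x X "Suc n" \<phi>] SS_dropr[of x X "Suc n" \<phi>]
    by (auto simp: tl_drop drop_Suc)
qed

lemma SS_finite: "finite X \<Longrightarrow> finite (SS X \<phi>)"
  unfolding SS_def by auto

lemma tl_l: "x \<in> X \<Longrightarrow> map Inl (tl (\<phi> x)) \<in> SS X \<phi>"
  using SS_dropl[of x X 1 \<phi>] by (simp add: drop_Suc map_tl)

lemma tl_r: "x \<in> X \<Longrightarrow> map Inr (tl (rev (\<phi> x))) \<in> SS X \<phi>"
  using SS_dropr[of x X 1 \<phi>] by (simp add: drop_Suc map_tl)

lemma nil_SS: "x \<in> X \<Longrightarrow> [] \<in> SS X \<phi>"
  using SS_dropl[of x X "length (\<phi> x)" \<phi>] by simp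

lemma DD_finite: "finite X \<Longrightarrow> finite (DD X \<phi>)"
  unfolding DD_def using SS_finite[of X \<phi>] by auto

lemma DD_QQ: "x0 \<in> X \<Longrightarrow> DD X \<phi> \<subseteq> QQ X \<phi> \<times> UNIV \<times> UNIV \<times> QQ X \<phi>"
  unfolding DD_def QQ_def using nil_SS[of x0 X \<phi>] tl_l[of _ X \<phi>] tl_r[of _ X \<phi>] SS_tl[of _ X \<phi>]
  by auto

abbreviation CC :: "('x \<Rightarrow> 'y list) \<Rightarrow> 'x list \<Rightarrow> 'y list" where
  "CC \<phi> u \<equiv> concat (map \<phi> u)"

definition Inv5 :: "'x set \<Rightarrow> ('x \<Rightarrow> 'y list) \<Rightarrow> ('y + 'y) list \<Rightarrow> ('y + 'y) list \<Rightarrow> 'x option list \<Rightarrow> bool" where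
  "Inv5 X \<phi> rem s ou \<longleftrightarrow> (\<exists>w. set w \<subseteq> X \<and> s = rem @ map Inr (rev (CC \<phi> w)) \<and> ou = map Some (rev w))"

definition Inv3 :: "'x set \<Rightarrow> ('x \<Rightarrow> 'y list) \<Rightarrow> ('y + 'y) list \<Rightarrow> ('y + 'y) list \<Rightarrow> 'x option list \<Rightarrow> bool" where
  "Inv3 X \<phi> rem s ou \<longleftrightarrow> (\<exists>v w. set v \<subseteq> X \<and> set w \<subseteq> X \<and> w \<noteq> [] \<and>
     s = rem @ map Inl (CC \<phi> v) @ map Inr (rev (CC \<phi> w)) \<and> ou = map Some v @ None # map Some (rev w))"

definition Inv1 :: "'x set \<Rightarrow> ('x \<Rightarrow> 'y list) \<Rightarrow> ('y + 'y) list \<Rightarrow> ('y + 'y) list \<Rightarrow> 'x option list \<Rightarrow> bool" where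
  "Inv1 X \<phi> rem s ou \<longleftrightarrow> (\<exists>u v w. set u \<subseteq> X \<and> set v \<subseteq> X \<and> set w \<subseteq> X \<and> v \<noteq> [] \<and> w \<noteq> [] \<and>
     s = rem @ map Inl (CC \<phi> u) @ map Inl (CC \<phi> v) @ map Inr (rev (CC \<phi> w)) \<and>
     ou = map Some u @ None # map Some v @ None # map Some (rev w))"

definition Inv0 :: "'x set \<Rightarrow> ('x \<Rightarrow> 'y list) \<Rightarrow> ('y + 'y) list \<Rightarrow> 'x option list \<Rightarrow> bool" where
  "Inv0 X \<phi> s ou \<longleftrightarrow> (\<exists>u v w. set u \<subseteq> X \<and> set v \<subseteq> X \<and> set w \<subseteq> X \<and> u \<noteq> [] \<and> v \<noteq> [] \<and> w \<noteq> [] \<and>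
     s = map Inl (CC \<phi> u) @ map Inl (CC \<phi> v) @ map Inr (rev (CC \<phi> w)) \<and>
     ou = map Some u @ None # map Some v @ None # map Some (rev w))"

definition Inv :: "'x set \<Rightarrow> ('x \<Rightarrow> 'y list) \<Rightarrow> nat \<times> ('y + 'y) list \<Rightarrow> ('y + 'y) list \<Rightarrow> 'x option list \<Rightarrow> bool" where
  "Inv X \<phi> st s ou \<longleftrightarrow>
    (if fst st = 0 then snd st = [] \<and> Inv0 X \<phi> s ou
     else if fst st = 1 then Inv1 X \<phi> (snd st) s ou
     else if fst st = 3 then Inv3 X \<phi> (snd st) s ou
     else if fst st = 5 then Inv5 X \<phi> (snd st) s ou else False)"

lemma hdtl_l: "\<phi> x \<noteq> [] \<Longrightarrow> map Inl (\<phi> x) = Inl (hd (\<phi> x)) # map Inl (tl (\<phi> x))"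
  by (cases "\<phi> x") auto

lemma hdtl_r: "\<phi> x \<noteq> [] \<Longrightarrow> map Inr (rev (\<phi> x)) = Inr (hd (rev (\<phi> x))) # map Inr (tl (rev (\<phi> x)))"
  by (cases "rev (\<phi> x)") auto

lemma st01:
  assumes "Inv1 X \<phi> (map Inl (tl (\<phi> x))) s ou" "x \<in> X" "\<phi> x \<noteq> []"
  shows "Inv0 X \<phi> (Inl (hd (\<phi> x)) # s) (Some x # ou)"
proof -
  from assms(1) obtain u v w where h: "set u \<subseteq> X" "set v \<subseteq> X" "set w \<subseteq> X" "v \<noteq> []" "w \<noteq> []"
     "s = map Inl (tl (\<phi> x)) @ map Inl (CC \<phi> u) @ map Inl (CC \<phi> v) @ map Inr (rev (CC \<phi> w))"
     "ou = map Some u @ None # map Some v @ None # map Some (rev w)"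
    unfolding Inv1_def by blast
  show ?thesis unfolding Inv0_def
    by (rule exI[of _ "x # u"], rule exI[of _ v], rule exI[of _ w]) (use h assms(2,3) in \<open>simp add: hdtl_l[of \<phi> x, OF assms(3)]\<close>)
qed

lemma st11:
  assumes "Inv1 X \<phi> (map Inl (tl (\<phi> x))) s ou" "x \<in> X" "\<phi> x \<noteq> []"
  shows "Inv1 X \<phi> [] (Inl (hd (\<phi> x)) # s) (Some x # ou)"
proof -
  from assms(1) obtain u v w where h: "set u \<subseteq> X" "set v \<subseteq> X" "set w \<subseteq> X" "v \<noteq> []" "w \<noteq> []"
     "s = map Inl (tl (\<phi> x)) @ map Inl (CC \<phi> u) @ map Inl (CC \<phi> v) @ map Inr (rev (CC \<phi> w))"
     "ou = map Some u @ None # map Some v @ None # map Some (rev w)"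
    unfolding Inv1_def by blast
  show ?thesis unfolding Inv1_def
    by (rule exI[of _ "x # u"], rule exI[of _ v], rule exI[of _ w]) (use h assms(2,3) in \<open>simp add: hdtl_l[of \<phi> x, OF assms(3)]\<close>)
qed

lemma st13:
  assumes "Inv3 X \<phi> (map Inl (tl (\<phi> x))) s ou" "x \<in> X" "\<phi> x \<noteq> []"
  shows "Inv1 X \<phi> [] (Inl (hd (\<phi> x)) # s) (None # Some x # ou)"
proof -
  from assms(1) obtain v w where h: "set v \<subseteq> X" "set w \<subseteq> X" "w \<noteq> []"
     "s = map Inl (tl (\<phi> x)) @ map Inl (CC \<phi> v) @ map Inr (rev (CC \<phi> w))"
     "ou = map Some v @ None # map Some (rev w)"
    unfolding Inv3_def by blast
  show ?thesis unfolding Inv1_def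
    by (rule exI[of _ "[]"], rule exI[of _ "x # v"], rule exI[of _ w]) (use h assms(2,3) in \<open>simp add: hdtl_l[of \<phi> x, OF assms(3)]\<close>)
qed

lemma st33:
  assumes "Inv3 X \<phi> (map Inl (tl (\<phi> x))) s ou" "x \<in> X" "\<phi> x \<noteq> []"
  shows "Inv3 X \<phi> [] (Inl (hd (\<phi> x)) # s) (Some x # ou)"
proof -
  from assms(1) obtain v w where h: "set v \<subseteq> X" "set w \<subseteq> X" "w \<noteq> []"
     "s = map Inl (tl (\<phi> x)) @ map Inl (CC \<phi> v) @ map Inr (rev (CC \<phi> w))"
     "ou = map Some v @ None # map Some (rev w)"
    unfolding Inv3_def by blast
  show ?thesis unfolding Inv3_def
    by (rule exI[of _ "x # v"], rule exI[of _ w]) (use h assms(2,3) in \<open>simp add: hdtl_l[of \<phi> x, OF assms(3)]\<close>)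
qed

lemma st35:
  assumes "Inv5 X \<phi> (map Inr (tl (rev (\<phi> x)))) s ou" "x \<in> X" "\<phi> x \<noteq> []"
  shows "Inv3 X \<phi> [] (Inr (hd (rev (\<phi> x))) # s) (None # Some x # ou)"
proof -
  from assms(1) obtain w where h: "set w \<subseteq> X"
     "s = map Inr (tl (rev (\<phi> x))) @ map Inr (rev (CC \<phi> w))" "ou = map Some (rev w)"
    unfolding Inv5_def by blast
  show ?thesis unfolding Inv3_def
    by (rule exI[of _ "[]"], rule exI[of _ "w @ [x]"]) (use h assms(2,3) in \<open>simp add: hdtl_r[of \<phi> x, OF assms(3)]\<close>)
qed

lemma st55:
  assumes "Inv5 X \<phi> (map Inr (tl (rev (\<phi> x)))) s ou" "x \<in> X" "\<phi> x \<noteq> []"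
  shows "Inv5 X \<phi> [] (Inr (hd (rev (\<phi> x))) # s) (Some x # ou)"
proof -
  from assms(1) obtain w where h: "set w \<subseteq> X"
     "s = map Inr (tl (rev (\<phi> x))) @ map Inr (rev (CC \<phi> w))" "ou = map Some (rev w)"
    unfolding Inv5_def by blast
  show ?thesis unfolding Inv5_def
    by (rule exI[of _ "w @ [x]"]) (use h assms(2,3) in \<open>simp add: hdtl_r[of \<phi> x, OF assms(3)]\<close>)
qed

lemma st_skip:
  assumes "l \<noteq> []" "k \<in> {1, 3, 5}" "Inv X \<phi> (k, tl l) s ou"
  shows "Inv X \<phi> (k, l) (hd l # s) ou"
proof -
  from assms(1) obtain a l' where l: "l = a # l'" by (cases l) auto
  show ?thesis using assms(2,3) unfolding l Inv_def Inv1_def Inv3_def Inv5_def by auto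
qed

lemma Inv_step:
  assumes "(p, a, out, r) \<in> DD X \<phi>" "Inv X \<phi> r s ou" "\<forall>x\<in>X. \<phi> x \<noteq> []"
  shows "Inv X \<phi> p (a # s) (out @ ou)"
  using assms(1)
  unfolding DD_def
proof (elim UnE imageE)
  fix x assume "x \<in> X" "(p, a, out, r) = ((0, []), Inl (hd (\<phi> x)), [Some x], (1, map Inl (tl (\<phi> x))))"
  then show ?thesis using st01[of X \<phi> x s ou] assms(2,3) by (auto simp: Inv_def)
next
  fix x assume "x \<in> X" "(p, a, out, r) = ((1, []), Inl (hd (\<phi> x)), [Some x], (1, map Inl (tl (\<phi> x))))"
  then show ?thesis using st11[of X \<phi> x s ou] assms(2,3) by (auto simp: Inv_def)
next
  fix x assume "x \<in> X" "(p, a, out, r) = ((1, []), Inl (hd (\<phi> x)), [None, Some x], (3, map Inl (tl (\<phi> x))))"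
  then show ?thesis using st13[of X \<phi> x s ou] assms(2,3) by (auto simp: Inv_def)
next
  fix x assume "x \<in> X" "(p, a, out, r) = ((3, []), Inl (hd (\<phi> x)), [Some x], (3, map Inl (tl (\<phi> x))))"
  then show ?thesis using st33[of X \<phi> x s ou] assms(2,3) by (auto simp: Inv_def)
next
  fix x assume "x \<in> X" "(p, a, out, r) = ((3, []), Inr (hd (rev (\<phi> x))), [None, Some x], (5, map Inr (tl (rev (\<phi> x)))))"
  then show ?thesis using st35[of X \<phi> x s ou] assms(2,3) by (auto simp: Inv_def)
next
  fix x assume "x \<in> X" "(p, a, out, r) = ((5, []), Inr (hd (rev (\<phi> x))), [Some x], (5, map Inr (tl (rev (\<phi> x)))))"
  then show ?thesis using st55[of X \<phi> x s ou] assms(2,3) by (auto simp: Inv_def)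
next
  fix kl assume kl: "kl \<in> {1, 3, 5} \<times> (SS X \<phi> - {[]})" "(p, a, out, r) = (\<lambda>(k, l). ((k, l), hd l, [], (k, tl l))) kl"
  obtain k l where kl': "kl = (k, l)" by (cases kl)
  have "l \<noteq> []" "k \<in> {1, 3, 5}" using kl kl' by auto
  moreover have "p = (k, l)" "a = hd l" "out = []" "r = (k, tl l)" using kl kl' by auto
  ultimately show ?thesis using st_skip[of l k X \<phi> s ou] assms(2) by simp
qed

lemma run_Inv:
  assumes "run (DD X \<phi>) p s q ou" "q = (5, [])" "\<forall>x\<in>X. \<phi> x \<noteq> []"
  shows "Inv X \<phi> p s ou"
  using assms
proof (induction rule: run.induct)
  case (run_nil p)
  then show ?case unfolding Inv_def Inv5_def by auto
next
  case (run_step p a out r w q ou)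
  then show ?case using Inv_step[of p a out r X \<phi> w ou] by blast
qed

lemma skip_run:
  assumes "k \<in> {1, 3, 5}" shows "l \<in> SS X \<phi> \<Longrightarrow> run (DD X \<phi>) (k, l) l (k, []) []"
proof (induction l)
  case Nil show ?case by (rule run.run_nil)
next
  case (Cons b l)
  have "((k, b # l), b, [], (k, l)) \<in> (\<lambda>(k, l). ((k, l), hd l, [], (k, tl l))) ` ({1, 3, 5} \<times> (SS X \<phi> - {[]}))"
    using Cons.prems assms by (intro image_eqI[of _ _ "(k, b # l)"]) auto
  then have tr: "((k, b # l), b, [], (k, l)) \<in> DD X \<phi>" unfolding DD_def by blast
  have "l \<in> SS X \<phi>" using SS_tl[OF Cons.prems] by simp
  from run.run_step[OF tr Cons.IH[OF this]] show ?case by simp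
qed

lemma trans_skip:
  assumes "(p, a, out, (k, l)) \<in> DD X \<phi>" "k \<in> {1, 3, 5}" "l \<in> SS X \<phi>"
  shows "run (DD X \<phi>) p (a # l) (k, []) out"
  using run.run_step[OF assms(1) skip_run[OF assms(2,3)]] by simp

lemma letter_l:
  assumes "x \<in> X" "\<phi> x \<noteq> []" "(p, Inl (hd (\<phi> x)), out, (k, map Inl (tl (\<phi> x)))) \<in> DD X \<phi>" "k \<in> {1, 3, 5}"
  shows "run (DD X \<phi>) p (map Inl (\<phi> x)) (k, []) out"
  unfolding hdtl_l[of \<phi> x, OF assms(2)] by (rule trans_skip[OF assms(3,4) tl_l[OF assms(1)]])

lemma letter_r:
  assumes "x \<in> X" "\<phi> x \<noteq> []" "(p, Inr (hd (rev (\<phi> x))), out, (k, map Inr (tl (rev (\<phi> x))))) \<in> DD X \<phi>" "k \<in> {1, 3, 5}"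
  shows "run (DD X \<phi>) p (map Inr (rev (\<phi> x))) (k, []) out"
  unfolding hdtl_r[of \<phi> x, OF assms(2)] by (rule trans_skip[OF assms(3,4) tl_r[OF assms(1)]])

lemma L0: "x \<in> X \<Longrightarrow> \<phi> x \<noteq> [] \<Longrightarrow> run (DD X \<phi>) (0, []) (map Inl (\<phi> x)) (1, []) [Some x]"
  by (rule letter_l) (auto simp: DD_def)
lemma L1: "x \<in> X \<Longrightarrow> \<phi> x \<noteq> [] \<Longrightarrow> run (DD X \<phi>) (1, []) (map Inl (\<phi> x)) (1, []) [Some x]"
  by (rule letter_l) (auto simp: DD_def)
lemma L13: "x \<in> X \<Longrightarrow> \<phi> x \<noteq> [] \<Longrightarrow> run (DD X \<phi>) (1, []) (map Inl (\<phi> x)) (3, []) [None, Some x]"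
  by (rule letter_l) (auto simp: DD_def)
lemma L3: "x \<in> X \<Longrightarrow> \<phi> x \<noteq> [] \<Longrightarrow> run (DD X \<phi>) (3, []) (map Inl (\<phi> x)) (3, []) [Some x]"
  by (rule letter_l) (auto simp: DD_def)
lemma L35: "x \<in> X \<Longrightarrow> \<phi> x \<noteq> [] \<Longrightarrow> run (DD X \<phi>) (3, []) (map Inr (rev (\<phi> x))) (5, []) [None, Some x]"
  by (rule letter_r) (auto simp: DD_def)
lemma L5: "x \<in> X \<Longrightarrow> \<phi> x \<noteq> [] \<Longrightarrow> run (DD X \<phi>) (5, []) (map Inr (rev (\<phi> x))) (5, []) [Some x]"
  by (rule letter_r) (auto simp: DD_def)

lemma W1: "set u \<subseteq> X \<Longrightarrow> \<forall>x\<in>X. \<phi> x \<noteq> [] \<Longrightarrow> run (DD X \<phi>) (1, []) (map Inl (CC \<phi> u)) (1, []) (map Some u)"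
proof (induction u)
  case Nil then show ?case using run.run_nil by simp
next
  case (Cons x u)
  from run_append[OF L1[of x X \<phi>] Cons.IH] Cons.prems show ?case by simp
qed

lemma W3: "set u \<subseteq> X \<Longrightarrow> \<forall>x\<in>X. \<phi> x \<noteq> [] \<Longrightarrow> run (DD X \<phi>) (3, []) (map Inl (CC \<phi> u)) (3, []) (map Some u)"
proof (induction u)
  case Nil then show ?case using run.run_nil by simp
next
  case (Cons x u)
  from run_append[OF L3[of x X \<phi>] Cons.IH] Cons.prems show ?case by simp
qed

lemma W5: "set w \<subseteq> X \<Longrightarrow> \<forall>x\<in>X. \<phi> x \<noteq> [] \<Longrightarrow> run (DD X \<phi>) (5, []) (map Inr (rev (CC \<phi> w))) (5, []) (map Some (rev w))"
proof (induction w rule: rev_induct)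
  case Nil then show ?case using run.run_nil by simp
next
  case (snoc x w)
  from run_append[OF L5[of x X \<phi>] snoc.IH] snoc.prems show ?case by simp
qed

lemma full_run:
  assumes "set u \<subseteq> X" "set v \<subseteq> X" "set w \<subseteq> X" "u \<noteq> []" "v \<noteq> []" "w \<noteq> []" "\<forall>x\<in>X. \<phi> x \<noteq> []"
  shows "run (DD X \<phi>) (0, []) (map Inl (CC \<phi> u) @ map Inl (CC \<phi> v) @ map Inr (rev (CC \<phi> w))) (5, [])
           (map Some u @ None # map Some v @ None # map Some (rev w))"
proof -
  obtain x1 u' where u: "u = x1 # u'" using assms(4) by (cases u) auto
  obtain y1 v' where v: "v = y1 # v'" using assms(5) by (cases v) auto
  obtain w' z where w: "w = w' @ [z]" using assms(6) by (cases w rule: rev_cases) auto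
  have x: "x1 \<in> X" "set u' \<subseteq> X" "y1 \<in> X" "set v' \<subseteq> X" "z \<in> X" "set w' \<subseteq> X"
    using assms(1-3) u v w by auto
  have r: "run (DD X \<phi>) (0, [])
     (map Inl (\<phi> x1) @ map Inl (CC \<phi> u') @ map Inl (\<phi> y1) @ map Inl (CC \<phi> v') @
      map Inr (rev (\<phi> z)) @ map Inr (rev (CC \<phi> w'))) (5, [])
     ([Some x1] @ map Some u' @ [None, Some y1] @ map Some v' @ [None, Some z] @ map Some (rev w'))"
    using x assms(7)
    by (intro run_append[OF L0 run_append[OF W1 run_append[OF L13 run_append[OF W3 run_append[OF L35 W5]]]]]) auto
  then show ?thesis unfolding u v w by simp
qed

lemma part1:
  fixes Y :: "'y set" and h :: "'y \<Rightarrow> 'a::semigroup_mult"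
    and X :: "'x set" and g :: "'x \<Rightarrow> 'a"
  assumes gY: "gen_choice Y h" and cf: "context_free (loop_problem Y h)" and gX: "gen_choice X g"
  shows "context_free (mult_table g (plus_words X))"
proof -
  define \<phi> where "\<phi> x = (SOME w. set w \<subseteq> Y \<and> w \<noteq> [] \<and> sigma h w = g x)" for x
  have phi: "set (\<phi> x) \<subseteq> Y \<and> \<phi> x \<noteq> [] \<and> sigma h (\<phi> x) = g x" for x
  proof -
    from gY obtain w where "w \<in> lists Y" "w \<noteq> []" "sigma h w = g x" unfolding gen_choice_def by blast
    then have "\<exists>w. set w \<subseteq> Y \<and> w \<noteq> [] \<and> sigma h w = g x" by auto
    then show ?thesis unfolding \<phi>_def by (rule someI_ex)
  qed
  have ne: "\<forall>x\<in>X. \<phi> x \<noteq> []" using phi by blast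
  from gX obtain w0 where "w0 \<in> lists X" "w0 \<noteq> []" unfolding gen_choice_def by blast
  then obtain x0 where x0: "x0 \<in> X" by (cases w0) auto
  have fX: "finite X" using gX unfolding gen_choice_def by simp
  have eq: "mult_table g (plus_words X) = {ou. \<exists>s\<in>loop_problem Y h. \<exists>f\<in>{(5, [])}. run (DD X \<phi>) (0, []) s f ou}"
  proof (intro equalityI subsetI)
    fix ou assume "ou \<in> mult_table g (plus_words X)"
    then obtain u v w where uvw: "set u \<subseteq> X" "set v \<subseteq> X" "set w \<subseteq> X" "u \<noteq> []" "v \<noteq> []" "w \<noteq> []"
      "sigma g (u @ v) = sigma g w" "ou = map Some u @ [None] @ map Some v @ [None] @ map Some (rev w)"
      unfolding mult_table_def plus_words_def by (simp add: lists_eq_set) blast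
    have "map Inl (CC \<phi> u) @ map Inl (CC \<phi> v) @ map Inr (rev (CC \<phi> w)) \<in> loop_problem Y h"
      using loop_word_iff[of X \<phi> Y h g u v w] phi uvw by blast
    moreover have "run (DD X \<phi>) (0, []) (map Inl (CC \<phi> u) @ map Inl (CC \<phi> v) @ map Inr (rev (CC \<phi> w))) (5, []) ou"
      using full_run[OF uvw(1-6) ne] uvw(8) by simp
    ultimately show "ou \<in> {ou. \<exists>s\<in>loop_problem Y h. \<exists>f\<in>{(5, [])}. run (DD X \<phi>) (0, []) s f ou}" by blast
  next
    fix ou assume "ou \<in> {ou. \<exists>s\<in>loop_problem Y h. \<exists>f\<in>{(5, [])}. run (DD X \<phi>) (0, []) s f ou}"
    then obtain s where s: "s \<in> loop_problem Y h" "run (DD X \<phi>) (0, []) s (5, []) ou" by blast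
    from run_Inv[OF s(2) refl ne] obtain u v w where uvw: "set u \<subseteq> X" "set v \<subseteq> X" "set w \<subseteq> X"
      "u \<noteq> []" "v \<noteq> []" "w \<noteq> []"
      "s = map Inl (CC \<phi> u) @ map Inl (CC \<phi> v) @ map Inr (rev (CC \<phi> w))"
      "ou = map Some u @ None # map Some v @ None # map Some (rev w)"
      unfolding Inv_def Inv0_def by auto
    have sg: "sigma g (u @ v) = sigma g w"
      using loop_word_iff[of X \<phi> Y h g u v w] phi uvw s(1) by blast
    show "ou \<in> mult_table g (plus_words X)"
      unfolding mult_table_def plus_words_def mem_Collect_eq
      by (rule exI[of _ u], rule exI[of _ v], rule exI[of _ w]) (use uvw sg in \<open>simp add: lists_eq_set\<close>)
  qed
  have q0: "(0, []) \<in> QQ X \<phi>" and f5: "(5, []) \<in> QQ X \<phi>"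
    unfolding QQ_def using nil_SS[OF x0] by auto
  have "context_free {ou. \<exists>s\<in>loop_problem Y h. \<exists>f\<in>{(5, [])}. run (DD X \<phi>) (0, []) s f ou}"
    by (rule transducer_cf[OF _ DD_finite[OF fX] DD_QQ[OF x0] q0 _ cf])
       (use fX SS_finite[OF fX, of \<phi>] f5 in \<open>auto simp: QQ_def\<close>)
  then show ?thesis using eq by simp
qed

lemma plus_words_regular: "regular (plus_words (X' :: 't set))"
proof -
  define \<delta> :: "nat \<Rightarrow> 't \<Rightarrow> nat set" where "\<delta> q t = (if t \<in> X' \<and> q \<in> {0, 1} then {1} else {})" for q t
  have reach: "q \<in> {0, 1} \<Longrightarrow> nfa_reach \<delta> q w = (if w = [] then {q} else if set w \<subseteq> X' then {1} else {})" for q w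
  proof (induction w arbitrary: q)
    case Nil then show ?case by simp
  next
    case (Cons t w)
    show ?case
    proof (cases "t \<in> X'")
      case True
      then have "nfa_reach \<delta> q (t # w) = nfa_reach \<delta> 1 w" using Cons.prems by (simp add: \<delta>_def)
      also have "\<dots> = (if w = [] then {1} else if set w \<subseteq> X' then {1} else {})" using Cons.IH[of 1] by simp
      finally show ?thesis using True by auto
    next
      case False
      then show ?thesis by (simp add: \<delta>_def)
    qed
  qed
  have "plus_words X' = {w. nfa_reach \<delta> 0 w \<inter> {1} \<noteq> {}}"
    unfolding plus_words_def using reach[of 0] by (auto simp: lists_eq_set)
  moreover have "\<forall>q t. \<delta> q t \<subseteq> {0, 1}" by (simp add: \<delta>_def)
  ultimately show ?thesis unfolding regular_def
    by (intro exI[of _ "{0, 1}"] exI[of _ 0] exI[of _ "{1}"] exI[of _ \<delta>]) auto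
qed

theorem proposition6p4:
  fixes Y :: "'y set" and h :: "'y \<Rightarrow> 'a::semigroup_mult"
    and X :: "'x set" and g :: "'x \<Rightarrow> 'a"
  assumes "gen_choice Y h"
    and "context_free (loop_problem Y h)"
    and "gen_choice X g"
  shows "context_free (mult_table g (plus_words X)) \<and> word_hyperbolic_DG TYPE('a)"
proof
  show "context_free (mult_table g (plus_words X))" by (rule part1[OF assms])
next
  have fX: "finite X" using assms(3) unfolding gen_choice_def by simp
  obtain f :: "'x \<Rightarrow> nat" where f: "inj_on f X"
    using finite_imp_inj_to_nat_seg[OF fX] by blast
  define X' where "X' = f ` X"
  define g' where "g' = g \<circ> inv_into X f"
  have gf: "g' (f x) = g x" if "x \<in> X" for x
    unfolding g'_def using f that by simp
  have sig: "sigma g' (map f w) = sigma g w" if "set w \<subseteq> X" for w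
  proof -
    have "eval1 g' (map f w) = eval1 (g' \<circ> f) w" by (rule eval1_map)
    also have "\<dots> = eval1 g w" by (rule eval1_cong) (use that gf in auto)
    finally show ?thesis unfolding sigma_def by simp
  qed
  have surj: "\<exists>w\<in>plus_words X'. sigma g' w = s" for s
  proof -
    from assms(3) obtain w where w: "w \<in> lists X" "w \<noteq> []" "sigma g w = s" unfolding gen_choice_def by blast
    then have "map f w \<in> plus_words X'" unfolding plus_words_def X'_def by auto
    moreover have "sigma g' (map f w) = s" using sig[of w] w by (simp add: lists_eq_set)
    ultimately show ?thesis by blast
  qed
  have gX': "gen_choice X' g'"
    unfolding gen_choice_def using fX surj unfolding X'_def plus_words_def by auto
  have "context_free (mult_table g' (plus_words X'))" by (rule part1[OF assms(1,2) gX'])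
  then show "word_hyperbolic_DG TYPE('a)"
    unfolding word_hyperbolic_DG_def using gX' surj plus_words_regular[of X']
    by blast
qed

end
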